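(* For all graphs $G$ and $H$: (i) $\max\{\gamma^{SLD}(G),\gamma^{SLD}(H)\}\le\gamma^{SLD}(G\,\square\, H)\le\min\{|V(H)|\,\gamma^{SLD}(G),\ |V(G)|\,\gamma^{SLD}(H)\}$; (ii) $\max\{\gamma^{DLD}(G),\gamma^{DLD}(H)\}\le\gamma^{DLD}(G\,\square\, H)\le\min\{|V(H)|\,\gamma^{DLD}(G),\ |V(G)|\,\gamma^{DLD}(H)\}$.
   Context: All graphs are finite, simple and undirected (not necessarily connected). For a vertex $u$, $N(u)$ is its set of neighbours and $N[u]=N(u)\cup\{u\}$. A code is a non-empty subset $C$ of the vertex set $V$; $I(C;u)=N[u]\cap C$. A code $C$ is self-locating-dominating if for every $u\in V\setminus C$ we have $I(C;u)\neq\emptyset$ and $\bigcap_{c\in I(C;u)}N[c]=\{u\}$. A code $C$ is solid-locating-dominating if $I(C;u)\ne\emptyset$ for every $u\in V\setminus C$ and $I(C;u)\not\subseteq I(C;v)$ for all distinct $u,v\in V\setminus C$. $\gamma^{SLD}$ and $\gamma^{DLD}$ denote the minimum sizes of such codes. The Cartesian product $G\square H$ has vertex set $V(G)\times V(H)$, with $(u,v)$ adjacent to $(u',v')$ iff either $u=u'$ and $vv'\in E(H)$, or $uu'\in E(G)$ and $v=v'$. *)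

theory Defs
  imports Main
begin

definition fin_graph :: "'a set \<Rightarrow> ('a \<Rightarrow> 'a \<Rightarrow> bool) \<Rightarrow> bool" where
  "fin_graph V E \<longleftrightarrow> finite V \<and> V \<noteq> {} \<and>
     (\<forall>u v. E u v \<longrightarrow> u \<in> V \<and> v \<in> V) \<and>
     (\<forall>u v. E u v \<longrightarrow> E v u) \<and> (\<forall>u. \<not> E u u)"

definition cnbhd :: "'a set \<Rightarrow> ('a \<Rightarrow> 'a \<Rightarrow> bool) \<Rightarrow> 'a \<Rightarrow> 'a set" where
  "cnbhd V E u = insert u {v \<in> V. E u v}"

definition Ic :: "'a set \<Rightarrow> ('a \<Rightarrow> 'a \<Rightarrow> bool) \<Rightarrow> 'a set \<Rightarrow> 'a \<Rightarrow> 'a set" where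
  "Ic V E C u = cnbhd V E u \<inter> C"

definition self_ld :: "'a set \<Rightarrow> ('a \<Rightarrow> 'a \<Rightarrow> bool) \<Rightarrow> 'a set \<Rightarrow> bool" where
  "self_ld V E C \<longleftrightarrow> C \<subseteq> V \<and> C \<noteq> {} \<and>
     (\<forall>u \<in> V - C. Ic V E C u \<noteq> {} \<and> (\<Inter>c \<in> Ic V E C u. cnbhd V E c) = {u})"

definition solid_ld :: "'a set \<Rightarrow> ('a \<Rightarrow> 'a \<Rightarrow> bool) \<Rightarrow> 'a set \<Rightarrow> bool" where
  "solid_ld V E C \<longleftrightarrow> C \<subseteq> V \<and> C \<noteq> {} \<and>
     (\<forall>u \<in> V - C. Ic V E C u \<noteq> {}) \<and>
     (\<forall>u \<in> V - C. \<forall>v \<in> V - C. u \<noteq> v \<longrightarrow> \<not> Ic V E C u \<subseteq> Ic V E C v)"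

definition gamma_SLD :: "'a set \<Rightarrow> ('a \<Rightarrow> 'a \<Rightarrow> bool) \<Rightarrow> nat" where
  "gamma_SLD V E = Min (card ` {C. self_ld V E C})"

definition gamma_DLD :: "'a set \<Rightarrow> ('a \<Rightarrow> 'a \<Rightarrow> bool) \<Rightarrow> nat" where
  "gamma_DLD V E = Min (card ` {C. solid_ld V E C})"

definition cart_edge :: "('a \<Rightarrow> 'a \<Rightarrow> bool) \<Rightarrow> ('b \<Rightarrow> 'b \<Rightarrow> bool) \<Rightarrow> 'a \<times> 'b \<Rightarrow> 'a \<times> 'b \<Rightarrow> bool" where
  "cart_edge E1 E2 p q \<longleftrightarrow>
     (fst p = fst q \<and> E2 (snd p) (snd q)) \<or> (E1 (fst p) (fst q) \<and> snd p = snd q)"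

end

theory Submission
  imports Defs
begin

lemma cn_self: "u \<in> cnbhd V E u" by (simp add: cnbhd_def)

lemma cn_prod:
  assumes "fin_graph VG EG" "fin_graph VH EH" "u \<in> VG" "v \<in> VH"
  shows "cnbhd (VG \<times> VH) (cart_edge EG EH) (u,v) = cnbhd VG EG u \<times> {v} \<union> {u} \<times> cnbhd VH EH v"
  using assms unfolding cnbhd_def cart_edge_def fin_graph_def by auto

lemma cn_sym:
  assumes "fin_graph V E" "u \<in> V" "c \<in> cnbhd V E u" shows "u \<in> cnbhd V E c"
  using assms unfolding cnbhd_def fin_graph_def by auto

lemma cn_sub: assumes "fin_graph V E" "u \<in> V" shows "cnbhd V E u \<subseteq> V"
  using assms unfolding cnbhd_def fin_graph_def by auto

lemma fin_codes_SLD: "finite V \<Longrightarrow> finite (card ` {C. self_ld V E C})"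
  by (rule finite_imageI, rule finite_subset[of _ "Pow V"]) (auto simp: self_ld_def)
lemma fin_codes_DLD: "finite V \<Longrightarrow> finite (card ` {C. solid_ld V E C})"
  by (rule finite_imageI, rule finite_subset[of _ "Pow V"]) (auto simp: solid_ld_def)
lemma ne_SLD: "V \<noteq> {} \<Longrightarrow> self_ld V E V" by (simp add: self_ld_def)
lemma ne_DLD: "V \<noteq> {} \<Longrightarrow> solid_ld V E V" by (simp add: solid_ld_def)

lemma gamma_mono_gen:
  assumes "finite (card ` {C. A C})" "A a" "finite (card ` {C. B C})" "B b"
    and "\<And>D. B D \<Longrightarrow> \<exists>C. A C \<and> card C \<le> f (card D)"
  shows "Min (card ` {C. A C}) \<le> f (Min (card ` {C. B C}))"
proof -
  have "Min (card ` {C. B C}) \<in> card ` {C. B C}" using assms(3,4) by (intro Min_in) auto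
  then obtain D where D: "B D" "card D = Min (card ` {C. B C})" by auto
  then obtain C where C: "A C" "card C \<le> f (card D)" using assms(5) by blast
  have "Min (card ` {C. A C}) \<le> card C" using assms(1) C(1) by (intro Min_le) auto
  with C D show ?thesis by simp
qed

lemma Ic_prod_up:
  assumes "fin_graph VG EG" "fin_graph VH EH" "u \<in> VG - C" "v \<in> VH"
  shows "Ic (VG \<times> VH) (cart_edge EG EH) (C \<times> VH) (u,v) = Ic VG EG C u \<times> {v}"
  using assms by (auto simp: Ic_def cn_prod)

lemma up_SLD:
  assumes G: "fin_graph VG EG" and H: "fin_graph VH EH" and C: "self_ld VG EG C"
  shows "self_ld (VG \<times> VH) (cart_edge EG EH) (C \<times> VH)"
  unfolding self_ld_def
proof (intro conjI ballI)
  show "C \<times> VH \<subseteq> VG \<times> VH" using C by (auto simp: self_ld_def)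
  show "C \<times> VH \<noteq> {}" using C H by (auto simp: self_ld_def fin_graph_def)
  fix p assume p: "p \<in> VG \<times> VH - C \<times> VH"
  then obtain u v where pu: "p = (u,v)" "u \<in> VG - C" "v \<in> VH" by auto
  have I: "Ic (VG \<times> VH) (cart_edge EG EH) (C \<times> VH) p = Ic VG EG C u \<times> {v}"
    using Ic_prod_up[OF G H pu(2,3)] pu(1) by simp
  have cu: "Ic VG EG C u \<noteq> {}" "(\<Inter>c \<in> Ic VG EG C u. cnbhd VG EG c) = {u}"
    using C pu(2) by (auto simp: self_ld_def)
  show "Ic (VG \<times> VH) (cart_edge EG EH) (C \<times> VH) p \<noteq> {}" using I cu by simp
  have ICV: "Ic VG EG C u \<subseteq> C \<inter> VG" using C by (auto simp: self_ld_def Ic_def)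
  show "(\<Inter>c \<in> Ic (VG \<times> VH) (cart_edge EG EH) (C \<times> VH) p. cnbhd (VG \<times> VH) (cart_edge EG EH) c) = {p}"
  proof (rule set_eqI, rule iffI)
    fix q assume q: "q \<in> (\<Inter>c \<in> Ic (VG \<times> VH) (cart_edge EG EH) (C \<times> VH) p. cnbhd (VG \<times> VH) (cart_edge EG EH) c)"
    obtain x y where qx: "q = (x,y)" by force
    have A: "\<And>c. c \<in> Ic VG EG C u \<Longrightarrow> (x,y) \<in> cnbhd VG EG c \<times> {v} \<union> {c} \<times> cnbhd VH EH v"
    proof -
      fix c assume c: "c \<in> Ic VG EG C u"
      then have "(c,v) \<in> Ic (VG \<times> VH) (cart_edge EG EH) (C \<times> VH) p" using I by simp
      then have "(x,y) \<in> cnbhd (VG \<times> VH) (cart_edge EG EH) (c,v)" using q qx by blast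
      moreover have "c \<in> VG" using c ICV by auto
      ultimately show "(x,y) \<in> cnbhd VG EG c \<times> {v} \<union> {c} \<times> cnbhd VH EH v"
        using cn_prod[OF G H _ pu(3)] by auto
    qed
    show "q \<in> {p}"
    proof (cases "y = v")
      case True
      have "x \<in> (\<Inter>c \<in> Ic VG EG C u. cnbhd VG EG c)"
        using A True cn_self by fastforce
      then show ?thesis using cu True qx pu by simp
    next
      case False
      obtain c0 where c0: "c0 \<in> Ic VG EG C u" using cu by auto
      have allx: "\<And>c. c \<in> Ic VG EG C u \<Longrightarrow> c = x" using A False by auto
      then have "Ic VG EG C u = {x}" using c0 by auto
      then have "cnbhd VG EG x = {u}" using cu by simp
      then have "x = u" using cn_self[of x VG EG] by auto
      moreover have "x \<in> C" using c0 allx ICV by auto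
      ultimately show ?thesis using pu by simp
    qed
  next
    fix q assume "q \<in> {p}"
    then have q: "q = (u,v)" using pu by simp
    show "q \<in> (\<Inter>c \<in> Ic (VG \<times> VH) (cart_edge EG EH) (C \<times> VH) p. cnbhd (VG \<times> VH) (cart_edge EG EH) c)"
    proof
      fix c assume "c \<in> Ic (VG \<times> VH) (cart_edge EG EH) (C \<times> VH) p"
      then obtain c1 where c1: "c = (c1,v)" "c1 \<in> Ic VG EG C u" using I by auto
      have "u \<in> cnbhd VG EG c1" using cu c1 by auto
      moreover have "c1 \<in> VG" using c1 ICV by auto
      ultimately show "q \<in> cnbhd (VG \<times> VH) (cart_edge EG EH) c"
        using cn_prod[OF G H _ pu(3)] q c1 by auto
    qed
  qed
qed

lemma up_DLD:
  assumes G: "fin_graph VG EG" and H: "fin_graph VH EH" and C: "solid_ld VG EG C"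
  shows "solid_ld (VG \<times> VH) (cart_edge EG EH) (C \<times> VH)"
  unfolding solid_ld_def
proof (intro conjI ballI impI)
  show "C \<times> VH \<subseteq> VG \<times> VH" using C by (auto simp: solid_ld_def)
  show "C \<times> VH \<noteq> {}" using C H by (auto simp: solid_ld_def fin_graph_def)
  fix p assume p: "p \<in> VG \<times> VH - C \<times> VH"
  then obtain u v where pu: "p = (u,v)" "u \<in> VG - C" "v \<in> VH" by auto
  show "Ic (VG \<times> VH) (cart_edge EG EH) (C \<times> VH) p \<noteq> {}"
    using Ic_prod_up[OF G H pu(2,3)] pu(1) C pu(2) by (auto simp: solid_ld_def)
next
  fix p q assume p: "p \<in> VG \<times> VH - C \<times> VH" and q: "q \<in> VG \<times> VH - C \<times> VH" and pq: "p \<noteq> q"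
  then obtain u v where pu: "p = (u,v)" "u \<in> VG - C" "v \<in> VH" by auto
  obtain w y where qw: "q = (w,y)" "w \<in> VG - C" "y \<in> VH" using q by auto
  have Ip: "Ic (VG \<times> VH) (cart_edge EG EH) (C \<times> VH) p = Ic VG EG C u \<times> {v}"
    using Ic_prod_up[OF G H pu(2,3)] pu(1) by simp
  have Iq: "Ic (VG \<times> VH) (cart_edge EG EH) (C \<times> VH) q = Ic VG EG C w \<times> {y}"
    using Ic_prod_up[OF G H qw(2,3)] qw(1) by simp
  have ne: "Ic VG EG C u \<noteq> {}" using C pu(2) by (auto simp: solid_ld_def)
  show "\<not> Ic (VG \<times> VH) (cart_edge EG EH) (C \<times> VH) p \<subseteq> Ic (VG \<times> VH) (cart_edge EG EH) (C \<times> VH) q"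
  proof (cases "v = y")
    case True
    then have "u \<noteq> w" using pq pu qw by auto
    then have "\<not> Ic VG EG C u \<subseteq> Ic VG EG C w" using C pu(2) qw(2) by (auto simp: solid_ld_def)
    then show ?thesis using Ip Iq True by auto
  next
    case False
    then show ?thesis using Ip Iq ne by auto
  qed
qed

lemma Ic_prod_low:
  assumes G: "fin_graph VG EG" and H: "fin_graph VH EH" and D: "D \<subseteq> VG \<times> VH"
    and u: "u \<in> VG - fst ` D" and v: "v \<in> VH"
  shows "Ic (VG \<times> VH) (cart_edge EG EH) D (u,v) = {(c,v) | c. c \<in> Ic VG EG (fst ` D) u \<and> (c,v) \<in> D}"
  using u v D by (auto simp: Ic_def cn_prod[OF G H] image_iff) force+

lemma low_SLD:
  assumes G: "fin_graph VG EG" and H: "fin_graph VH EH" and D: "self_ld (VG \<times> VH) (cart_edge EG EH) D"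
  shows "self_ld VG EG (fst ` D)"
  unfolding self_ld_def
proof (intro conjI ballI)
  have DV: "D \<subseteq> VG \<times> VH" using D by (simp add: self_ld_def)
  show "fst ` D \<subseteq> VG" "fst ` D \<noteq> {}" using D by (auto simp: self_ld_def)
  obtain v where v: "v \<in> VH" using H by (auto simp: fin_graph_def)
  fix u assume u: "u \<in> VG - fst ` D"
  have uv: "(u,v) \<in> VG \<times> VH - D" using u v by force
  let ?S = "Ic (VG \<times> VH) (cart_edge EG EH) D (u,v)"
  have S: "?S = {(c,v) | c. c \<in> Ic VG EG (fst ` D) u \<and> (c,v) \<in> D}"
    by (rule Ic_prod_low[OF G H DV u v])
  have Sp: "?S \<noteq> {}" "(\<Inter>c \<in> ?S. cnbhd (VG \<times> VH) (cart_edge EG EH) c) = {(u,v)}"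
    using D uv by (auto simp: self_ld_def)
  show "Ic VG EG (fst ` D) u \<noteq> {}" using Sp(1) S by auto
  have IV: "Ic VG EG (fst ` D) u \<subseteq> VG" using DV by (auto simp: Ic_def)
  show "(\<Inter>c \<in> Ic VG EG (fst ` D) u. cnbhd VG EG c) = {u}"
  proof (rule set_eqI, rule iffI)
    fix x assume x: "x \<in> (\<Inter>c \<in> Ic VG EG (fst ` D) u. cnbhd VG EG c)"
    have "(x,v) \<in> (\<Inter>c \<in> ?S. cnbhd (VG \<times> VH) (cart_edge EG EH) c)"
    proof
      fix p assume "p \<in> ?S"
      then obtain c where c: "p = (c,v)" "c \<in> Ic VG EG (fst ` D) u" using S by auto
      then have "x \<in> cnbhd VG EG c" using x by auto
      then show "(x,v) \<in> cnbhd (VG \<times> VH) (cart_edge EG EH) p"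
        using cn_prod[OF G H _ v, of c] c IV by auto
    qed
    then show "x \<in> {u}" using Sp(2) by auto
  next
    fix x assume "x \<in> {u}"
    then show "x \<in> (\<Inter>c \<in> Ic VG EG (fst ` D) u. cnbhd VG EG c)"
      using cn_sym[OF G] u by (auto simp: Ic_def)
  qed
qed

lemma low_DLD:
  assumes G: "fin_graph VG EG" and H: "fin_graph VH EH" and D: "solid_ld (VG \<times> VH) (cart_edge EG EH) D"
  shows "solid_ld VG EG (fst ` D)"
  unfolding solid_ld_def
proof (intro conjI ballI impI)
  have DV: "D \<subseteq> VG \<times> VH" using D by (simp add: solid_ld_def)
  show "fst ` D \<subseteq> VG" "fst ` D \<noteq> {}" using D by (auto simp: solid_ld_def)
  obtain v where v: "v \<in> VH" using H by (auto simp: fin_graph_def)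
  {
    fix u assume u: "u \<in> VG - fst ` D"
    have uv: "(u,v) \<in> VG \<times> VH - D" using u v by force
    have S: "Ic (VG \<times> VH) (cart_edge EG EH) D (u,v) = {(c,v) | c. c \<in> Ic VG EG (fst ` D) u \<and> (c,v) \<in> D}"
      by (rule Ic_prod_low[OF G H DV u v])
    have "Ic (VG \<times> VH) (cart_edge EG EH) D (u,v) \<noteq> {}" using D uv by (auto simp: solid_ld_def)
    then show "Ic VG EG (fst ` D) u \<noteq> {}" using S by auto
  }
  fix u w assume u: "u \<in> VG - fst ` D" and w: "w \<in> VG - fst ` D" and uw: "u \<noteq> w"
  have uv: "(u,v) \<in> VG \<times> VH - D" using u v by force
  have wv: "(w,v) \<in> VG \<times> VH - D" using w v by force
  have Su: "Ic (VG \<times> VH) (cart_edge EG EH) D (u,v) = {(c,v) | c. c \<in> Ic VG EG (fst ` D) u \<and> (c,v) \<in> D}"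
    by (rule Ic_prod_low[OF G H DV u v])
  have Sw: "Ic (VG \<times> VH) (cart_edge EG EH) D (w,v) = {(c,v) | c. c \<in> Ic VG EG (fst ` D) w \<and> (c,v) \<in> D}"
    by (rule Ic_prod_low[OF G H DV w v])
  have "\<not> Ic (VG \<times> VH) (cart_edge EG EH) D (u,v) \<subseteq> Ic (VG \<times> VH) (cart_edge EG EH) D (w,v)"
    using D uv wv uw by (auto simp: solid_ld_def)
  then obtain c where "c \<in> Ic VG EG (fst ` D) u" "(c,v) \<in> D" "c \<notin> Ic VG EG (fst ` D) w"
    using Su Sw by auto
  then show "\<not> Ic VG EG (fst ` D) u \<subseteq> Ic VG EG (fst ` D) w" by auto
qed

lemma swap_cn: "cnbhd (VH \<times> VG) (cart_edge EH EG) (prod.swap p) = prod.swap ` cnbhd (VG \<times> VH) (cart_edge EG EH) p"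
  by (auto simp: cnbhd_def cart_edge_def image_iff)

lemma swap_Ic: "Ic (VH \<times> VG) (cart_edge EH EG) (prod.swap ` C) (prod.swap p) = prod.swap ` Ic (VG \<times> VH) (cart_edge EG EH) C p"
  unfolding Ic_def swap_cn by (simp add: image_Int)

lemma swap_SLD:
  assumes C: "self_ld (VG \<times> VH) (cart_edge EG EH) C"
  shows "self_ld (VH \<times> VG) (cart_edge EH EG) (prod.swap ` C)"
  unfolding self_ld_def
proof (intro conjI ballI)
  show "prod.swap ` C \<subseteq> VH \<times> VG" "prod.swap ` C \<noteq> {}" using C by (auto simp: self_ld_def)
  fix q assume q: "q \<in> VH \<times> VG - prod.swap ` C"
  define p where "p = prod.swap q"
  have qp: "q = prod.swap p" by (simp add: p_def)
  have p: "p \<in> VG \<times> VH - C" using q by (auto simp: p_def image_iff)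
  have P: "Ic (VG \<times> VH) (cart_edge EG EH) C p \<noteq> {}"
    "(\<Inter>c \<in> Ic (VG \<times> VH) (cart_edge EG EH) C p. cnbhd (VG \<times> VH) (cart_edge EG EH) c) = {p}"
    using C p by (auto simp: self_ld_def)
  show "Ic (VH \<times> VG) (cart_edge EH EG) (prod.swap ` C) q \<noteq> {}"
    using P(1) unfolding qp swap_Ic by simp
  have "(\<Inter>c \<in> Ic (VH \<times> VG) (cart_edge EH EG) (prod.swap ` C) q. cnbhd (VH \<times> VG) (cart_edge EH EG) c)
     = (\<Inter>c \<in> Ic (VG \<times> VH) (cart_edge EG EH) C p. cnbhd (VH \<times> VG) (cart_edge EH EG) (prod.swap c))"
    unfolding qp swap_Ic by simp
  also have "\<dots> = (\<Inter>c \<in> Ic (VG \<times> VH) (cart_edge EG EH) C p. prod.swap ` cnbhd (VG \<times> VH) (cart_edge EG EH) c)"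
    unfolding swap_cn ..
  also have "\<dots> = prod.swap ` (\<Inter>c \<in> Ic (VG \<times> VH) (cart_edge EG EH) C p. cnbhd (VG \<times> VH) (cart_edge EG EH) c)"
    proof -
    obtain j where "j \<in> Ic (VG \<times> VH) (cart_edge EG EH) C p" using P(1) by auto
    then show ?thesis by (intro image_INT[symmetric, of _ UNIV]) (auto simp: inj_on_def)
  qed
  also have "\<dots> = {q}" using P(2) qp by simp
  finally show "(\<Inter>c \<in> Ic (VH \<times> VG) (cart_edge EH EG) (prod.swap ` C) q. cnbhd (VH \<times> VG) (cart_edge EH EG) c) = {q}" .
qed

lemma swap_DLD:
  assumes C: "solid_ld (VG \<times> VH) (cart_edge EG EH) C"
  shows "solid_ld (VH \<times> VG) (cart_edge EH EG) (prod.swap ` C)"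
  unfolding solid_ld_def
proof (intro conjI ballI impI)
  show "prod.swap ` C \<subseteq> VH \<times> VG" "prod.swap ` C \<noteq> {}" using C by (auto simp: solid_ld_def)
  fix q assume q: "q \<in> VH \<times> VG - prod.swap ` C"
  define p where "p = prod.swap q"
  have qp: "q = prod.swap p" by (simp add: p_def)
  have p: "p \<in> VG \<times> VH - C" using q by (auto simp: p_def image_iff)
  show "Ic (VH \<times> VG) (cart_edge EH EG) (prod.swap ` C) q \<noteq> {}"
    using C p unfolding qp swap_Ic by (auto simp: solid_ld_def)
next
  fix q r assume q: "q \<in> VH \<times> VG - prod.swap ` C" and r: "r \<in> VH \<times> VG - prod.swap ` C" and qr: "q \<noteq> r"
  define p where "p = prod.swap q"
  define s where "s = prod.swap r"
  have qp: "q = prod.swap p" by (simp add: p_def)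
  have rs: "r = prod.swap s" by (simp add: s_def)
  have p: "p \<in> VG \<times> VH - C" using q by (auto simp: p_def image_iff)
  have s: "s \<in> VG \<times> VH - C" using r by (auto simp: s_def image_iff)
  have "p \<noteq> s" using qr qp rs by auto
  then have "\<not> Ic (VG \<times> VH) (cart_edge EG EH) C p \<subseteq> Ic (VG \<times> VH) (cart_edge EG EH) C s"
    using C p s by (auto simp: solid_ld_def)
  then show "\<not> Ic (VH \<times> VG) (cart_edge EH EG) (prod.swap ` C) q \<subseteq> Ic (VH \<times> VG) (cart_edge EH EG) (prod.swap ` C) r"
    unfolding qp rs swap_Ic by (simp add: inj_image_subset_iff)
qed

lemma fg_prod: "fin_graph VG EG \<Longrightarrow> fin_graph VH EH \<Longrightarrow> finite (VG \<times> VH) \<and> VG \<times> VH \<noteq> {}"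
  by (auto simp: fin_graph_def)


lemma gamma_mono_id:
  assumes "finite (card ` {C. A C})" "A a" "finite (card ` {C. B C})" "B b"
    and "\<And>D. B D \<Longrightarrow> \<exists>C. A C \<and> card C \<le> card D"
  shows "Min (card ` {C. A C}) \<le> Min (card ` {C. B C})"
  using gamma_mono_gen[where f="\<lambda>n. n", OF assms] .

lemma fG: "fin_graph V E \<Longrightarrow> finite V" "fin_graph V E \<Longrightarrow> V \<noteq> {}"
  by (auto simp: fin_graph_def)

lemma gS_low:
  assumes G: "fin_graph VG EG" and H: "fin_graph VH EH"
  shows "gamma_SLD VG EG \<le> gamma_SLD (VG \<times> VH) (cart_edge EG EH)"
  unfolding gamma_SLD_def
proof (rule gamma_mono_id)
  show "finite (card ` {C. self_ld VG EG C})" using fin_codes_SLD fG(1)[OF G] .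
  show "self_ld VG EG VG" using ne_SLD fG(2)[OF G] .
  show "finite (card ` {C. self_ld (VG \<times> VH) (cart_edge EG EH) C})" using fg_prod[OF G H] by (intro fin_codes_SLD) simp
  show "self_ld (VG \<times> VH) (cart_edge EG EH) (VG \<times> VH)" using fg_prod[OF G H] by (intro ne_SLD) simp
  fix D assume D: "self_ld (VG \<times> VH) (cart_edge EG EH) D"
  have "finite D" using D fg_prod[OF G H] unfolding self_ld_def by (meson finite_subset)
  then show "\<exists>C. self_ld VG EG C \<and> card C \<le> card D" using low_SLD[OF G H D] card_image_le by (intro exI[of _ "fst ` D"]) simp
qed

lemma gS_up:
  assumes G: "fin_graph VG EG" and H: "fin_graph VH EH"
  shows "gamma_SLD (VG \<times> VH) (cart_edge EG EH) \<le> card VH * gamma_SLD VG EG"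
  unfolding gamma_SLD_def
proof (rule gamma_mono_gen[where f="\<lambda>n. card VH * n"])
  show "finite (card ` {C. self_ld VG EG C})" using fin_codes_SLD fG(1)[OF G] .
  show "self_ld VG EG VG" using ne_SLD fG(2)[OF G] .
  show "finite (card ` {C. self_ld (VG \<times> VH) (cart_edge EG EH) C})" using fg_prod[OF G H] by (intro fin_codes_SLD) simp
  show "self_ld (VG \<times> VH) (cart_edge EG EH) (VG \<times> VH)" using fg_prod[OF G H] by (intro ne_SLD) simp
  fix D assume D: "self_ld VG EG D"
  have "card (D \<times> VH) = card VH * card D" by (simp add: card_cartesian_product)
  then show "\<exists>C. self_ld (VG \<times> VH) (cart_edge EG EH) C \<and> card C \<le> card VH * card D"
    using up_SLD[OF G H D] by (intro exI[of _ "D \<times> VH"]) simp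
qed

lemma gS_swap:
  assumes G: "fin_graph VG EG" and H: "fin_graph VH EH"
  shows "gamma_SLD (VH \<times> VG) (cart_edge EH EG) \<le> gamma_SLD (VG \<times> VH) (cart_edge EG EH)"
  unfolding gamma_SLD_def
proof (rule gamma_mono_id)
  show "finite (card ` {C. self_ld (VH \<times> VG) (cart_edge EH EG) C})" using fg_prod[OF H G] by (intro fin_codes_SLD) simp
  show "self_ld (VH \<times> VG) (cart_edge EH EG) (VH \<times> VG)" using fg_prod[OF H G] by (intro ne_SLD) simp
  show "finite (card ` {C. self_ld (VG \<times> VH) (cart_edge EG EH) C})" using fg_prod[OF G H] by (intro fin_codes_SLD) simp
  show "self_ld (VG \<times> VH) (cart_edge EG EH) (VG \<times> VH)" using fg_prod[OF G H] by (intro ne_SLD) simp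
  fix D assume D: "self_ld (VG \<times> VH) (cart_edge EG EH) D"
  have "finite D" using D fg_prod[OF G H] unfolding self_ld_def by (meson finite_subset)
  then show "\<exists>C. self_ld (VH \<times> VG) (cart_edge EH EG) C \<and> card C \<le> card D" using swap_SLD[OF D] card_image_le by (intro exI[of _ "prod.swap ` D"]) simp
qed

lemma gD_low:
  assumes G: "fin_graph VG EG" and H: "fin_graph VH EH"
  shows "gamma_DLD VG EG \<le> gamma_DLD (VG \<times> VH) (cart_edge EG EH)"
  unfolding gamma_DLD_def
proof (rule gamma_mono_id)
  show "finite (card ` {C. solid_ld VG EG C})" using fin_codes_DLD fG(1)[OF G] .
  show "solid_ld VG EG VG" using ne_DLD fG(2)[OF G] .
  show "finite (card ` {C. solid_ld (VG \<times> VH) (cart_edge EG EH) C})" using fg_prod[OF G H] by (intro fin_codes_DLD) simp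
  show "solid_ld (VG \<times> VH) (cart_edge EG EH) (VG \<times> VH)" using fg_prod[OF G H] by (intro ne_DLD) simp
  fix D assume D: "solid_ld (VG \<times> VH) (cart_edge EG EH) D"
  have "finite D" using D fg_prod[OF G H] unfolding solid_ld_def by (meson finite_subset)
  then show "\<exists>C. solid_ld VG EG C \<and> card C \<le> card D" using low_DLD[OF G H D] card_image_le by (intro exI[of _ "fst ` D"]) simp
qed

lemma gD_up:
  assumes G: "fin_graph VG EG" and H: "fin_graph VH EH"
  shows "gamma_DLD (VG \<times> VH) (cart_edge EG EH) \<le> card VH * gamma_DLD VG EG"
  unfolding gamma_DLD_def
proof (rule gamma_mono_gen[where f="\<lambda>n. card VH * n"])
  show "finite (card ` {C. solid_ld VG EG C})" using fin_codes_DLD fG(1)[OF G] .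
  show "solid_ld VG EG VG" using ne_DLD fG(2)[OF G] .
  show "finite (card ` {C. solid_ld (VG \<times> VH) (cart_edge EG EH) C})" using fg_prod[OF G H] by (intro fin_codes_DLD) simp
  show "solid_ld (VG \<times> VH) (cart_edge EG EH) (VG \<times> VH)" using fg_prod[OF G H] by (intro ne_DLD) simp
  fix D assume D: "solid_ld VG EG D"
  have "card (D \<times> VH) = card VH * card D" by (simp add: card_cartesian_product)
  then show "\<exists>C. solid_ld (VG \<times> VH) (cart_edge EG EH) C \<and> card C \<le> card VH * card D"
    using up_DLD[OF G H D] by (intro exI[of _ "D \<times> VH"]) simp
qed

lemma gD_swap:
  assumes G: "fin_graph VG EG" and H: "fin_graph VH EH"
  shows "gamma_DLD (VH \<times> VG) (cart_edge EH EG) \<le> gamma_DLD (VG \<times> VH) (cart_edge EG EH)"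
  unfolding gamma_DLD_def
proof (rule gamma_mono_id)
  show "finite (card ` {C. solid_ld (VH \<times> VG) (cart_edge EH EG) C})" using fg_prod[OF H G] by (intro fin_codes_DLD) simp
  show "solid_ld (VH \<times> VG) (cart_edge EH EG) (VH \<times> VG)" using fg_prod[OF H G] by (intro ne_DLD) simp
  show "finite (card ` {C. solid_ld (VG \<times> VH) (cart_edge EG EH) C})" using fg_prod[OF G H] by (intro fin_codes_DLD) simp
  show "solid_ld (VG \<times> VH) (cart_edge EG EH) (VG \<times> VH)" using fg_prod[OF G H] by (intro ne_DLD) simp
  fix D assume D: "solid_ld (VG \<times> VH) (cart_edge EG EH) D"
  have "finite D" using D fg_prod[OF G H] unfolding solid_ld_def by (meson finite_subset)
  then show "\<exists>C. solid_ld (VH \<times> VG) (cart_edge EH EG) C \<and> card C \<le> card D" using swap_DLD[OF D] card_image_le by (intro exI[of _ "prod.swap ` D"]) simp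
qed

theorem mainTheorem14:
  fixes VG :: "'a set" and EG :: "'a \<Rightarrow> 'a \<Rightarrow> bool"
    and VH :: "'b set" and EH :: "'b \<Rightarrow> 'b \<Rightarrow> bool"
  assumes "fin_graph VG EG" and "fin_graph VH EH"
  shows "(max (gamma_SLD VG EG) (gamma_SLD VH EH) \<le> gamma_SLD (VG \<times> VH) (cart_edge EG EH) \<and>
         gamma_SLD (VG \<times> VH) (cart_edge EG EH)
           \<le> min (card VH * gamma_SLD VG EG) (card VG * gamma_SLD VH EH)) \<and>
         (max (gamma_DLD VG EG) (gamma_DLD VH EH) \<le> gamma_DLD (VG \<times> VH) (cart_edge EG EH) \<and>
         gamma_DLD (VG \<times> VH) (cart_edge EG EH)
           \<le> min (card VH * gamma_DLD VG EG) (card VG * gamma_DLD VH EH))"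
  using gS_low[OF assms] gS_low[OF assms(2,1)] gS_up[OF assms] gS_up[OF assms(2,1)]
    gS_swap[OF assms] gS_swap[OF assms(2,1)]
    gD_low[OF assms] gD_low[OF assms(2,1)] gD_up[OF assms] gD_up[OF assms(2,1)]
    gD_swap[OF assms] gD_swap[OF assms(2,1)]
  unfolding max_def min_def by (simp split: if_splits)

end
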